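(* For $r\in\mathbb{N}_0$ and $n\ge1$, the expected size $E^L_{n;r}$ of the $r$th fringe of a simple two-dimensional lattice path chosen uniformly at random among the $4^n$ paths of length $n$ is \[ E^L_{n;r}=4^{r+1-n}\sum_{\lambda\ge1}\frac{2\lambda^3+\lambda}{3}\bigg[\binom{2n-1}{n-2^r\lambda}-\binom{2n-1}{n-2^r\lambda-1}\bigg], \] where binomial coefficients with negative lower index are $0$.
   Context: A simple two-dimensional lattice path is a finite nonempty word over the steps $\{\uparrow,\rightarrow,\downarrow,\leftarrow\}$; its length $|\ell|$ is the number of steps. The reduction $\Phi_L(\ell)$ of a path $\ell$ of length $\ge2$: first, if the first step of $\ell$ is vertical, the entire path is rotated by $90^\circ$ clockwise; then, if the last step is horizontal, this last step alone is rotated by $90^\circ$ clockwise. The resulting path decomposes uniquely as $H_1V_1\cdots H_kV_k$ ($k\ge1$) with each $H_i$ a nonempty maximal run of horizontal steps and each $V_i$ a nonempty maximal run of vertical steps. Each block $H_iV_i$ is replaced by $\nearrow$, $\searrow$, $\swarrow$, $\nwarrow$ according as ($H_i$ starts with $\rightarrow$, $V_i$ with $\uparrow$), ($\rightarrow$, $\downarrow$), ($\leftarrow$, $\downarrow$), ($\leftarrow$, $\uparrow$); the diagonal path is then rotated by $45^\circ$ clockwise, giving $\Phi_L(\ell)$ of length $k$. The compactification degree $\mathrm{cdeg}(\ell)$ is the number $m\ge0$ such that $\Phi_L^m(\ell)$ is a single step. The size of the $r$th fringe of $\ell$ is $|\Phi_L^r(\ell)|$ if $\mathrm{cdeg}(\ell)\ge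 r$, and $0$ otherwise. *)

theory Defs
  imports Complex_Main
begin

datatype step = U | R | D | L

lemma UNIV_step: "(UNIV :: step set) = {U, R, D, L}"
  by (auto intro: step.exhaust)

instance step :: finite
  by standard (simp add: UNIV_step)

type_synonym lpath = "step list"

definition vertical :: "step \<Rightarrow> bool" where
  "vertical s \<longleftrightarrow> s = U \<or> s = D"

definition horizontal :: "step \<Rightarrow> bool" where
  "horizontal s \<longleftrightarrow> s = R \<or> s = L"

fun rot :: "step \<Rightarrow> step" where
  "rot U = R" | "rot R = D" | "rot D = L" | "rot L = U"

text \<open>Block H V, with H starting with a and V starting with b, is replaced by a diagonal
  step which is then rotated by 45 degrees clockwise:
  NE \<mapsto> right, SE \<mapsto> down, SW \<mapsto> left, NW \<mapsto> up.\<close>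
fun diag :: "step \<Rightarrow> step \<Rightarrow> step" where
  "diag R U = R" | "diag R D = D" | "diag L D = L" | "diag L U = U"
| "diag _ _ = undefined"

function blocks :: "lpath \<Rightarrow> lpath" where
  "blocks [] = []"
| "blocks (s # xs) =
     (let h = takeWhile horizontal (s # xs);
          rest = dropWhile horizontal (s # xs);
          v = takeWhile vertical rest;
          rest2 = dropWhile vertical rest
      in diag (hd h) (hd v) # blocks rest2)"
  by pat_completeness auto
lemma len_dw_le: "length (dropWhile P xs) \<le> length xs"
  by (rule length_dropWhile_le)

lemma blocks_term_aux:
  "length (dropWhile vertical (dropWhile horizontal (s # xs))) < Suc (length xs)"
proof (cases "horizontal s")
  case True
  have "length (dropWhile vertical (dropWhile horizontal xs)) \<le> length xs"
    using len_dw_le[of vertical "dropWhile horizontal xs"] len_dw_le[of horizontal xs]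
    by linarith
  with True show ?thesis by simp
next
  case False
  then have "vertical s" by (cases s) (auto simp: horizontal_def vertical_def)
  with False show ?thesis
    using len_dw_le[of vertical xs] by simp
qed

termination
proof (relation "measure length")
  show "wf (measure length)" by simp
next
  fix s :: step and xs h rest v rest2
  assume "h = takeWhile horizontal (s # xs)" "rest = dropWhile horizontal (s # xs)"
    "v = takeWhile vertical rest" "rest2 = dropWhile vertical rest"
  then show "(rest2, s # xs) \<in> measure length"
    using blocks_term_aux[of s xs] by (simp only: in_measure list.size)
qed

text \<open>The reduction Phi_L (meaningful for paths of length at least 2).\<close>
definition phiL :: "lpath \<Rightarrow> lpath" where
  "phiL l =
     (let l1 = (if vertical (hd l) then map rot l else l);
          l2 = (if horizontal (last l1) then butlast l1 @ [rot (last l1)] else l1)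
      in blocks l2)"

definition cdeg :: "lpath \<Rightarrow> nat" where
  "cdeg l = (LEAST m. length ((phiL ^^ m) l) = 1)"

definition fringe_size :: "nat \<Rightarrow> lpath \<Rightarrow> nat" where
  "fringe_size r l = (if cdeg l \<ge> r then length ((phiL ^^ r) l) else 0)"

definition expected_fringe :: "nat \<Rightarrow> nat \<Rightarrow> real" where
  "expected_fringe n r =
     (\<Sum>l\<in>{l :: lpath. length l = n}. real (fringe_size r l)) / 4 ^ n"

definition binomZ :: "nat \<Rightarrow> int \<Rightarrow> nat" where
  "binomZ m k = (if k < 0 then 0 else m choose nat k)"

end

theory Submission
  imports Defs
begin


lemma hv_iff: "horizontal s \<longleftrightarrow> \<not> vertical s"
  by (cases s) (auto simp: horizontal_def vertical_def)

lemma finite_lists: "finite {x::step list. length x = m}"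
proof -
  have "{x::step list. length x = m} = {xs. set xs \<subseteq> UNIV \<and> length xs = m}" by simp
  then show ?thesis using finite_lists_length_eq[of "UNIV::step set" m] by simp
qed

lemma sum_len_Suc:
  "(\<Sum>x\<in>{x::step list. length x = Suc m}. f x) = (\<Sum>s\<in>UNIV. \<Sum>x\<in>{x. length x = m}. f (s # x))"
proof -
  have e: "{x::step list. length x = Suc m} = (\<lambda>(s,x). s#x) ` (UNIV \<times> {x. length x = m})"
    by (auto simp: length_Suc_conv image_iff)
  have i: "inj_on (\<lambda>(s,x). s#x) (UNIV \<times> {x::step list. length x = m})"
    by (auto simp: inj_on_def)
  show ?thesis unfolding e sum.reindex[OF i] sum.cartesian_product by (simp add: case_prod_beta comp_def)
qed

lemma sum_len_snoc:
  "(\<Sum>x\<in>{x::step list. length x = Suc m}. f x) = (\<Sum>s\<in>UNIV. \<Sum>x\<in>{x. length x = m}. f (x @ [s]))"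
proof -
  have e: "{x::step list. length x = Suc m} = (\<lambda>(s,x). x@[s]) ` (UNIV \<times> {x. length x = m})"
    by (auto simp: length_Suc_conv_rev image_iff)
  have i: "inj_on (\<lambda>(s,x). x@[s]) (UNIV \<times> {x::step list. length x = m})"
    by (auto simp: inj_on_def)
  show ?thesis unfolding e sum.reindex[OF i] sum.cartesian_product by (simp add: case_prod_beta comp_def)
qed

lemma sum_UNIV_step: "(\<Sum>s\<in>(UNIV::step set). f s) = f U + f R + f D + f L"
  by (simp add: UNIV_step add.assoc)

definition W :: "nat \<Rightarrow> (step list \<Rightarrow> real) \<Rightarrow> real" where
  "W k G = (\<Sum>l\<in>{l::step list. length l = k}. G l)"

lemma W_0: "W 0 G = G []" by (simp add: W_def)
lemma W_Suc: "W (Suc k) G = W k (\<lambda>q. G (U # q)) + W k (\<lambda>q. G (R # q)) + W k (\<lambda>q. G (D # q)) + W k (\<lambda>q. G (L # q))"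
  by (simp add: W_def sum_len_Suc sum_UNIV_step)

lemma W_add: "W k (\<lambda>q. F q + G q) = W k F + W k G" by (simp add: W_def sum.distrib)

fun vp :: "step \<Rightarrow> step" where "vp R = U" | "vp U = U" | "vp D = D" | "vp L = D"
fun setH :: "step \<Rightarrow> step list \<Rightarrow> step list" where
  "setH s [] = []" | "setH s (c#t) = diag s (vp c) # t"

lemma vp_diag: "horizontal a \<Longrightarrow> vertical u \<Longrightarrow> vp (diag a u) = u"
  by (cases a; cases u) (auto simp: horizontal_def vertical_def)

lemma W_setH: "W k (\<lambda>q. G (setH R q)) + W k (\<lambda>q. G (setH L q)) = 2 * W k G"
proof (cases k)
  case 0 then show ?thesis by (simp add: W_0)
next
  case (Suc k') then show ?thesis by (simp add: W_Suc)
qed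

lemma W_diag: "W k (\<lambda>q. G (diag R U # q)) + W k (\<lambda>q. G (diag R D # q))
   + W k (\<lambda>q. G (diag L U # q)) + W k (\<lambda>q. G (diag L D # q)) = W (Suc k) G"
  by (simp add: W_Suc)

lemma blocks_HV: "horizontal s \<Longrightarrow> x \<noteq> [] \<Longrightarrow> vertical (hd x) \<Longrightarrow>
   blocks (s # x) = diag s (hd x) # blocks (dropWhile vertical x)"
  by (cases x) (auto simp: Let_def hv_iff)

lemma blocks_HH: "horizontal s \<Longrightarrow> x \<noteq> [] \<Longrightarrow> horizontal (hd x) \<Longrightarrow> vertical (last x) \<Longrightarrow>
   blocks (s # x) = setH s (blocks x)"
proof -
  assume hs: "horizontal s" and ne: "x \<noteq> []" and hx: "horizontal (hd x)" and lx: "vertical (last x)"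
  obtain a x' where x: "x = a # x'" using ne by (cases x) auto
  define r where "r = dropWhile horizontal x'"
  have rne: "r \<noteq> []"
  proof
    assume "r = []"
    then have "\<forall>y\<in>set x'. horizontal y" unfolding r_def by (simp add: dropWhile_eq_Nil_conv)
    then show False using lx hx x by (cases "x' = []") (auto simp: hv_iff)
  qed
  have hr: "vertical (hd r)" using hd_dropWhile[of horizontal x'] rne unfolding r_def by (simp add: hv_iff)
  have tw: "takeWhile vertical r \<noteq> [] \<and> hd (takeWhile vertical r) = hd r"
    using rne hr by (cases r) auto
  have ha: "horizontal a" using hx x by simp
  show ?thesis using hs ha tw
    by (simp add: x Let_def r_def[symmetric] vp_diag hr)
qed

definition nrm1 :: "step list \<Rightarrow> bool" where
  "nrm1 x \<longleftrightarrow> x \<noteq> [] \<and> horizontal (hd x) \<and> vertical (last x)"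
definition vnrm :: "step list \<Rightarrow> bool" where
  "vnrm x \<longleftrightarrow> x \<noteq> [] \<and> vertical (hd x) \<and> vertical (last x)"

definition SA :: "nat \<Rightarrow> (step list \<Rightarrow> real) \<Rightarrow> real" where
  "SA m G = (\<Sum>x\<in>{x::step list. length x = m}. if nrm1 x then G (blocks x) else 0)"
definition SV :: "nat \<Rightarrow> (step \<Rightarrow> step list \<Rightarrow> real) \<Rightarrow> real" where
  "SV m G = (\<Sum>x\<in>{x::step list. length x = m}.
      if vnrm x then G (hd x) (blocks (dropWhile vertical x)) else 0)"

lemma SA_pt: fixes G :: "step list \<Rightarrow> real" shows "(if nrm1 (s#x) then G (blocks (s#x)) else 0) =
  (if horizontal s then (if nrm1 x then G (setH s (blocks x)) else 0)
     + (if vnrm x then G (diag s (hd x) # blocks (dropWhile vertical x)) else 0) else 0)"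
proof (cases "horizontal s")
  case False then show ?thesis by (simp add: nrm1_def)
next
  case hs: True
  show ?thesis
  proof (cases "x = []")
    case True then show ?thesis using hs by (simp add: nrm1_def vnrm_def hv_iff)
  next
    case ne: False
    show ?thesis
    proof (cases "horizontal (hd x)")
      case True then show ?thesis using hs ne blocks_HH[OF hs ne True]
        by (auto simp: nrm1_def vnrm_def hv_iff)
    next
      case False then show ?thesis using hs ne blocks_HV[OF hs ne]
        by (auto simp: nrm1_def vnrm_def hv_iff)
    qed
  qed
qed

lemma SA_Suc: "SA (Suc m) G = SA m (\<lambda>q. G (setH R q)) + SA m (\<lambda>q. G (setH L q))
   + SV m (\<lambda>t q. G (diag R t # q)) + SV m (\<lambda>t q. G (diag L t # q))"
  unfolding SA_def SV_def sum_len_Suc SA_pt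
  by (simp add: sum_UNIV_step hv_iff vertical_def sum.distrib)

lemma SV_pt: fixes G :: "step \<Rightarrow> step list \<Rightarrow> real" shows "(if vnrm (t#x) then G (hd (t#x)) (blocks (dropWhile vertical (t#x))) else 0) =
  (if vertical t then (if x = [] then G t [] else 0)
     + (if vnrm x then G t (blocks (dropWhile vertical x)) else 0)
     + (if nrm1 x then G t (blocks x) else 0) else 0)"
proof (cases "vertical t")
  case False then show ?thesis by (simp add: vnrm_def)
next
  case vt: True
  show ?thesis
  proof (cases "x = []")
    case True then show ?thesis using vt by (simp add: nrm1_def vnrm_def)
  next
    case ne: False
    then obtain a x' where x: "x = a # x'" by (cases x) auto
    show ?thesis using vt by (auto simp: nrm1_def vnrm_def hv_iff x)
  qed
qed

lemma sum_nil: "(\<Sum>x\<in>{x::step list. length x = m}. if x = [] then c else 0) = (if m = 0 then c else 0)"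
  by (cases m) (auto simp: sum_len_Suc)

lemma SV_Suc: "SV (Suc m) G = (if m = 0 then G U [] + G D [] else 0)
   + SV m (\<lambda>_ q. G U q) + SA m (G U) + SV m (\<lambda>_ q. G D q) + SA m (G D)"
  unfolding SV_def SA_def sum_len_Suc SV_pt
  by (simp add: sum_UNIV_step vertical_def sum.distrib sum_nil)



fun A :: "nat \<Rightarrow> nat \<Rightarrow> real" and B :: "nat \<Rightarrow> nat \<Rightarrow> real" where
  "A 0 k = 0"
| "A (Suc m) k = 2 * A m k + (case k of 0 \<Rightarrow> 0 | Suc k' \<Rightarrow> B m k')"
| "B 0 k = 0"
| "B (Suc m) k = (if m = 0 \<and> k = 0 then 1 else 0) + 2 * B m k + A m k"

lemma A_0: "A m 0 = 0" by (induction m) auto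

lemma closed:
  "\<forall>G G' N. m \<le> N \<longrightarrow> SA m G = (\<Sum>k\<le>N. A m k * W k G) \<and>
     SV m G' = (\<Sum>k\<le>N. B m k * (W k (G' U) + W k (G' D)))"
proof (induction m)
  case 0 then show ?case by (simp add: SA_def SV_def nrm1_def vnrm_def)
next
  case (Suc m)
  show ?case
  proof (intro allI impI conjI)
    fix G :: "step list \<Rightarrow> real" and N :: nat
    assume N: "Suc m \<le> N"
    then obtain N' where N': "N = Suc N'" "m \<le> N'" by (cases N) auto
    have "SA (Suc m) G = (\<Sum>k\<le>N. A m k * (W k (\<lambda>q. G (setH R q)) + W k (\<lambda>q. G (setH L q))))
       + (\<Sum>k\<le>N'. B m k * (W k (\<lambda>q. G (diag R U # q)) + W k (\<lambda>q. G (diag R D # q))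
          + W k (\<lambda>q. G (diag L U # q)) + W k (\<lambda>q. G (diag L D # q))))"
    proof -
      have "m \<le> N" using N by simp
      then have a: "\<And>G. SA m G = (\<Sum>k\<le>N. A m k * W k G)" using Suc.IH by blast
      have b: "\<And>G'. SV m G' = (\<Sum>k\<le>N'. B m k * (W k (G' U) + W k (G' D)))" using Suc.IH N'(2) by blast
      show ?thesis unfolding SA_Suc a b by (simp add: algebra_simps sum.distrib)
    qed
    also have "\<dots> = (\<Sum>k\<le>N. 2 * A m k * W k G) + (\<Sum>k\<le>N'. B m k * W (Suc k) G)"
      using W_setH[of _ G] by (simp add: W_Suc add_ac mult_ac)
    also have "\<dots> = (\<Sum>k\<le>N. A (Suc m) k * W k G)"
      unfolding N'(1) sum.atMost_Suc_shift by (simp add: algebra_simps sum.distrib A_0)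
    finally show "SA (Suc m) G = (\<Sum>k\<le>N. A (Suc m) k * W k G)" .
  next
    fix G' :: "step \<Rightarrow> step list \<Rightarrow> real" and N :: nat
    assume N: "Suc m \<le> N"
    then have Nm: "m \<le> N" by simp
    have "SV (Suc m) G' = (if m = 0 then G' U [] + G' D [] else 0) +
       (\<Sum>k\<le>N. (2 * B m k + A m k) * (W k (G' U) + W k (G' D)))"
      unfolding SV_Suc using Suc.IH Nm
      by (simp add: algebra_simps sum.distrib sum_distrib_left)
    also have "\<dots> = (\<Sum>k\<le>N. B (Suc m) k * (W k (G' U) + W k (G' D)))"
    proof -
      have "(\<Sum>k\<le>N. (if m = 0 \<and> k = 0 then 1 else 0) * (W k (G' U) + W k (G' D)))
          = (if m = 0 then G' U [] + G' D [] else 0)"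
      proof -
        have "(\<Sum>k\<le>N. (if m = 0 \<and> k = 0 then 1 else 0) * (W k (G' U) + W k (G' D)))
          = (\<Sum>k\<le>N. if k = 0 then (if m = 0 then W k (G' U) + W k (G' D) else 0) else 0)"
          by (rule sum.cong) auto
        then show ?thesis by (simp add: W_0)
      qed
      then show ?thesis by (simp add: algebra_simps sum.distrib)
    qed
    finally show "SV (Suc m) G' = (\<Sum>k\<le>N. B (Suc m) k * (W k (G' U) + W k (G' D)))" .
  qed
qed



definition fx :: "step \<Rightarrow> step" where "fx c = (if horizontal c then rot c else c)"

lemma phiL_snoc: "phiL (s # mid @ [t]) =
   (if vertical s then blocks (rot s # map rot mid @ [fx (rot t)]) else blocks (s # mid @ [fx t]))"
  by (simp add: phiL_def Let_def fx_def butlast_append del: blocks.simps)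

lemma sum_map_rot: "(\<Sum>x\<in>{x::step list. length x = m}. f (map rot x)) = (\<Sum>x\<in>{x. length x = m}. f x)"
proof (induction m arbitrary: f)
  case 0 then show ?case by simp
next
  case (Suc m)
  have "(\<Sum>x\<in>{x::step list. length x = Suc m}. f (map rot x)) =
     (\<Sum>s\<in>UNIV. \<Sum>x\<in>{x::step list. length x = m}. f (rot s # x))"
    unfolding sum_len_Suc using Suc.IH[of "\<lambda>x. f (rot _ # x)"] by simp
  also have "\<dots> = (\<Sum>x\<in>{x::step list. length x = Suc m}. f x)"
    unfolding sum_len_Suc sum_UNIV_step by (simp add: add_ac)
  finally show ?case .
qed

definition K :: "(step list \<Rightarrow> real) \<Rightarrow> nat \<Rightarrow> step \<Rightarrow> step \<Rightarrow> real" where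
  "K G m a b = (\<Sum>x\<in>{x::step list. length x = m}. G (blocks (a # x @ [b])))"

lemma K_phi: "(\<Sum>x\<in>{x::step list. length x = m}. G (phiL (s # x @ [t]))) =
   (if vertical s then K G m (rot s) (fx (rot t)) else K G m s (fx t))"
  unfolding phiL_snoc K_def
  using sum_map_rot[of "\<lambda>x. G (blocks (rot s # x @ [fx (rot t)]))" m] by simp

lemma count_phi: "(\<Sum>l\<in>{l::step list. length l = Suc (Suc m)}. G (phiL l)) = 4 * SA (Suc (Suc m)) G"
proof -
  have e1: "(\<Sum>l\<in>{l::step list. length l = Suc (Suc m)}. G (phiL l)) =
     (\<Sum>s\<in>UNIV. \<Sum>t\<in>UNIV. \<Sum>x\<in>{x::step list. length x = m}. G (phiL (s # x @ [t])))"
    by (simp only: sum_len_Suc[where m="Suc m"] sum_len_snoc[where m=m])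
  have e2: "(\<Sum>s\<in>UNIV. \<Sum>t\<in>UNIV. \<Sum>x\<in>{x::step list. length x = m}. G (phiL (s # x @ [t])))
     = 4 * (K G m R U + K G m R D + K G m L U + K G m L D)"
    unfolding K_phi sum_UNIV_step by (simp add: vertical_def fx_def horizontal_def)
  have e3: "SA (Suc (Suc m)) G = (\<Sum>s\<in>UNIV. \<Sum>t\<in>UNIV. \<Sum>x\<in>{x::step list. length x = m}.
        if nrm1 (s # x @ [t]) then G (blocks (s # x @ [t])) else 0)"
    unfolding SA_def by (simp only: sum_len_Suc[where m="Suc m"] sum_len_snoc[where m=m])
  have e4: "(\<Sum>s\<in>UNIV. \<Sum>t\<in>UNIV. \<Sum>x\<in>{x::step list. length x = m}.
        if nrm1 (s # x @ [t]) then G (blocks (s # x @ [t])) else 0) = K G m R U + K G m R D + K G m L U + K G m L D"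
    unfolding sum_UNIV_step K_def by (simp add: nrm1_def vertical_def horizontal_def)
  show ?thesis using e1 e2 e3 e4 by simp
qed



declare blocks.simps(2)[simp del]

lemma len_blocks_le: "length (blocks x) \<le> length x"
proof (induction x rule: blocks.induct)
  case 1 then show ?case by simp
next
  case (2 s xs)
  define rest2 where "rest2 = dropWhile vertical (dropWhile horizontal (s # xs))"
  have a: "length rest2 < Suc (length xs)" unfolding rest2_def by (rule blocks_term_aux)
  have b: "length (blocks (s#xs)) = Suc (length (blocks rest2))"
    by (subst blocks.simps(2)) (simp only: Let_def rest2_def list.size add_Suc_right add_0_right)
  have ih: "length (blocks rest2) \<le> length rest2" unfolding rest2_def by (rule 2[OF refl refl refl refl])
  show ?case using a b ih by simp
qed

lemma fx_vert: "vertical (fx c)" by (cases c) (auto simp: fx_def vertical_def horizontal_def)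

lemma len_blocks_nrm: "nrm1 x \<Longrightarrow> length (blocks x) < length x"
proof -
  assume n: "nrm1 x"
  then obtain a x' where x: "x = a # x'" and ha: "horizontal a" and lx: "vertical (last x)"
    by (cases x) (auto simp: nrm1_def)
  define r where "r = dropWhile horizontal x'"
  have rne: "r \<noteq> []"
  proof
    assume "r = []"
    then have "\<forall>y\<in>set x'. horizontal y" unfolding r_def by (simp add: dropWhile_eq_Nil_conv)
    then show False using lx ha x by (cases "x' = []") (auto simp: hv_iff)
  qed
  have hr: "vertical (hd r)" using hd_dropWhile[of horizontal x'] rne unfolding r_def by (simp add: hv_iff)
  obtain b r' where r: "r = b # r'" using rne by (cases r) auto
  have vb: "vertical b" using hr r by simp
  have l1: "length (dropWhile vertical r) \<le> length r'" using vb r by (simp add: length_dropWhile_le)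
  have l2: "length r \<le> length x'" unfolding r_def by (rule length_dropWhile_le)
  have "length (blocks x) = Suc (length (blocks (dropWhile vertical r)))"
    using ha unfolding x by (subst blocks.simps(2)) (simp add: Let_def r_def)
  also have "\<dots> \<le> Suc (length (dropWhile vertical r))" using len_blocks_le by simp
  also have "\<dots> < length x" using l1 l2 r x by simp
  finally show ?thesis .
qed

lemma blocks_ne: "x \<noteq> [] \<Longrightarrow> blocks x \<noteq> []" by (cases x) (auto simp: Let_def blocks.simps(2)[of _ "_"])

lemma len2_split: "2 \<le> length l \<Longrightarrow> \<exists>s mid t. l = s # mid @ [t]"
proof -
  assume "2 \<le> length l"
  then obtain s y where l: "l = s # y" "y \<noteq> []" by (cases l) (auto simp: Suc_le_eq)
  then obtain mid t where "y = mid @ [t]" by (cases y rule: rev_cases) auto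
  then show ?thesis using l by blast
qed

lemma phiL_len: "2 \<le> length l \<Longrightarrow> 1 \<le> length (phiL l) \<and> length (phiL l) < length l"
proof -
  assume "2 \<le> length l"
  then obtain s mid t where l: "l = s # mid @ [t]" using len2_split by blast
  have hrot: "vertical s \<Longrightarrow> horizontal (rot s)" by (cases s) (auto simp: vertical_def horizontal_def)
  show ?thesis
  proof (cases "vertical s")
    case True
    define X where "X = rot s # map rot mid @ [fx (rot t)]"
    have nrm: "nrm1 X" using hrot[OF True] fx_vert by (simp add: nrm1_def X_def)
    have ph: "phiL l = blocks X" by (simp add: l phiL_snoc True X_def)
    have lx: "length X = length l" by (simp add: X_def l)
    have "blocks X \<noteq> []" by (rule blocks_ne) (simp add: X_def)
    then show ?thesis using len_blocks_nrm[OF nrm] ph lx by (simp add: Suc_le_eq)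
  next
    case False
    define X where "X = s # mid @ [fx t]"
    have nrm: "nrm1 X" using False fx_vert by (simp add: nrm1_def X_def hv_iff)
    have ph: "phiL l = blocks X" by (simp add: l phiL_snoc False X_def)
    have lx: "length X = length l" by (simp add: X_def l)
    have "blocks X \<noteq> []" by (rule blocks_ne) (simp add: X_def)
    then show ?thesis using len_blocks_nrm[OF nrm] ph lx by (simp add: Suc_le_eq)
  qed
qed

lemma reach: "1 \<le> length l \<Longrightarrow> \<exists>m. length ((phiL ^^ m) l) = 1"
proof (induction "length l" arbitrary: l rule: less_induct)
  case less
  show ?case
  proof (cases "length l = 1")
    case True then show ?thesis by (intro exI[of _ 0]) simp
  next
    case False
    then have "2 \<le> length l" using less.prems by simp
    from phiL_len[OF this] less.hyps obtain m where "length ((phiL ^^ m) (phiL l)) = 1" by blast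
    then have "length ((phiL ^^ Suc m) l) = 1" by (simp add: funpow_Suc_right del: funpow.simps)
    then show ?thesis by blast
  qed
qed

lemma cdeg_Suc: "2 \<le> length l \<Longrightarrow> cdeg l = Suc (cdeg (phiL l))"
proof -
  assume l: "2 \<le> length l"
  obtain m where m: "length ((phiL ^^ m) l) = 1" using reach l by fastforce
  have "cdeg l = Suc (LEAST m. length ((phiL ^^ Suc m) l) = 1)"
    unfolding cdeg_def by (rule Least_Suc[of "\<lambda>m. length ((phiL ^^ m) l) = 1", OF m]) (use l in simp)
  then show ?thesis unfolding cdeg_def by (simp add: funpow_Suc_right del: funpow.simps)
qed

lemma cdeg_1: "length l = 1 \<Longrightarrow> cdeg l = 0"
  unfolding cdeg_def by (rule Least_eq_0) simp

lemma fringe_0: "fringe_size 0 l = length l" by (simp add: fringe_size_def)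
lemma fringe_Suc1: "length l = 1 \<Longrightarrow> fringe_size (Suc r) l = 0"
  by (simp add: fringe_size_def cdeg_1)
lemma fringe_Suc2: "2 \<le> length l \<Longrightarrow> fringe_size (Suc r) l = fringe_size r (phiL l)"
  by (simp add: fringe_size_def cdeg_Suc funpow_Suc_right del: funpow.simps)

definition S :: "nat \<Rightarrow> nat \<Rightarrow> real" where "S r n = W n (\<lambda>l. real (fringe_size r l))"

lemma W_const: "W n (\<lambda>_. c) = c * 4 ^ n"
  by (induction n) (simp_all add: W_0 W_Suc)

lemma W_cong: "(\<And>l. length l = n \<Longrightarrow> f l = g l) \<Longrightarrow> W n f = W n g"
  unfolding W_def by (rule sum.cong) auto

lemma S_0: "S 0 n = real n * 4 ^ n"
proof -
  have "S 0 n = W n (\<lambda>_. real n)" unfolding S_def by (rule W_cong) (simp add: fringe_0)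
  then show ?thesis by (simp add: W_const)
qed

lemma S_Suc1: "S (Suc r) 1 = 0"
proof -
  have "S (Suc r) 1 = W 1 (\<lambda>_. 0)" unfolding S_def by (rule W_cong) (simp add: fringe_Suc1)
  then show ?thesis by (simp add: W_const)
qed

lemma S_Suc2: "2 \<le> n \<Longrightarrow> S (Suc r) n = 4 * (\<Sum>k\<le>n. A n k * S r k)"
proof -
  assume n: "2 \<le> n"
  then obtain m where m: "n = Suc (Suc m)" by (metis add_2_eq_Suc le_Suc_ex)
  have "S (Suc r) n = W n (\<lambda>l. real (fringe_size r (phiL l)))"
    unfolding S_def by (rule W_cong) (simp add: fringe_Suc2 n)
  also have "\<dots> = 4 * SA n (\<lambda>l. real (fringe_size r l))"
    unfolding W_def m by (rule count_phi)
  also have "\<dots> = 4 * (\<Sum>k\<le>n. A n k * S r k)"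
  proof -
    have "SA n (\<lambda>l. real (fringe_size r l)) = (\<Sum>k\<le>n. A n k * W k (\<lambda>l. real (fringe_size r l)))"
      by (rule closed[of n, rule_format, OF order_refl, THEN conjunct1])
    then show ?thesis unfolding S_def by simp
  qed
  finally show ?thesis .
qed



definition Dz :: "nat \<Rightarrow> int \<Rightarrow> real" where
  "Dz n j = real (binomZ (2*n-1) (int n - j)) - real (binomZ (2*n-1) (int n - j - 1))"

lemma binomZ_Suc: "binomZ (Suc m) i = binomZ m i + binomZ m (i - 1)"
proof (cases "i < 0")
  case True then show ?thesis by (simp add: binomZ_def)
next
  case False
  show ?thesis
  proof (cases "i = 0")
    case True then show ?thesis by (simp add: binomZ_def)
  next
    case False
    define k where "k = nat (i - 1)"
    have k: "i = int (Suc k)" using False \<open>\<not> i < 0\<close> unfolding k_def by simp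
    have a: "nat i = Suc k" "nat (i - 1) = k" "\<not> i - 1 < 0" using k by auto
    then show ?thesis using \<open>\<not> i < 0\<close> by (simp add: binomZ_def)
  qed
qed

lemma binomZ2: "real (binomZ (Suc (Suc m)) i) =
   real (binomZ m i) + 2 * real (binomZ m (i - 1)) + real (binomZ m (i - 2))"
  by (simp add: binomZ_Suc algebra_simps)

lemma D_rec: "1 \<le> n \<Longrightarrow> Dz (Suc n) j = Dz n (j - 1) + 2 * Dz n j + Dz n (j + 1)"
proof -
  assume n: "1 \<le> n"
  define m where "m = 2*n - 1"
  have m2: "2 * Suc n - 1 = Suc (Suc m)" using n unfolding m_def by simp
  have "Dz (Suc n) j = real (binomZ (Suc (Suc m)) (int n + 1 - j)) - real (binomZ (Suc (Suc m)) (int n - j))"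
    unfolding Dz_def m2 by (simp add: algebra_simps)
  also have "\<dots> = (real (binomZ m (int n + 1 - j)) + 2 * real (binomZ m (int n - j)) + real (binomZ m (int n - j - 1)))
     - (real (binomZ m (int n - j)) + 2 * real (binomZ m (int n - j - 1)) + real (binomZ m (int n - j - 2)))"
    unfolding binomZ2 by (simp add: algebra_simps)
  also have "\<dots> = Dz n (j - 1) + 2 * Dz n j + Dz n (j + 1)"
    unfolding Dz_def m_def[symmetric] by (simp add: algebra_simps)
  finally show ?thesis .
qed

lemma D_van: "int n < j \<Longrightarrow> Dz n j = 0"
  by (simp add: Dz_def binomZ_def)

lemma D_0: "1 \<le> n \<Longrightarrow> Dz n 0 = 0"
proof -
  assume n: "1 \<le> n"
  have "(2*n-1) choose n = (2*n-1) choose (n - 1)"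
    using binomial_symmetric[of n "2*n-1"] n by simp
  then show ?thesis using n by (simp add: Dz_def binomZ_def nat_diff_distrib)
qed

lemma D_1: "Dz 1 j = (if j = 1 then 1 else if j = -1 then -1 else 0)"
proof -
  have "j = 1 \<or> j = 0 \<or> j = -1 \<or> j > 1 \<or> j < -1" by linarith
  then show ?thesis
  proof (elim disjE)
    assume "j < -1"
    then have "nat (1 - j) > 1" "nat (- j) > 1" by auto
    then show ?thesis using \<open>j < -1\<close> by (simp add: Dz_def binomZ_def binomial_eq_0)
  qed (auto simp: Dz_def binomZ_def)
qed

lemma D_1_even: "Dz 1 (2 * j) = 0"
proof -
  have "2*j \<noteq> 1" "2*j \<noteq> -1" by presburger+
  then show ?thesis using D_1[of "2*j"] by simp
qed



lemma A_1: "A (Suc 0) k = 0" by (cases k) auto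
lemma B_1: "B (Suc 0) k = (if k = 0 then 1 else 0)" by simp

lemma key: "1 \<le> n \<Longrightarrow> \<forall>N j. n \<le> N \<longrightarrow> (\<Sum>k\<le>N. A n k * Dz k j) = Dz n (2*j) \<and>
    (\<Sum>k\<le>N. B n k * Dz (Suc k) j) = Dz n (2*j-1) + Dz n (2*j+1)"
proof (induction n rule: nat_induct_at_least)
  case base
  show ?case
  proof (intro allI impI conjI)
    fix N :: nat and j :: int
    assume "1 \<le> N"
    show "(\<Sum>k\<le>N. A 1 k * Dz k j) = Dz 1 (2*j)" using D_1_even[of j] by (simp add: A_1 del: A.simps)
    have "(\<Sum>k\<le>N. B 1 k * Dz (Suc k) j) = (\<Sum>k\<le>N. if k = 0 then Dz 1 j else 0)"
      by (rule sum.cong) (auto simp: B_1)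
    also have "\<dots> = Dz 1 j" by simp
    also have "\<dots> = Dz 1 (2*j-1) + Dz 1 (2*j+1)"
    proof -
      have "j = 0 \<or> j = 1 \<or> j = -1 \<or> j > 1 \<or> j < -1" by linarith
      then show ?thesis unfolding D_1 by (elim disjE) auto
    qed
    finally show "(\<Sum>k\<le>N. B 1 k * Dz (Suc k) j) = Dz 1 (2*j-1) + Dz 1 (2*j+1)" .
  qed
next
  case (Suc n)
  show ?case
  proof (intro allI impI conjI)
    fix N :: nat and j :: int
    assume N: "Suc n \<le> N"
    then obtain N' where N': "N = Suc N'" "n \<le> N'" by (cases N) auto
    have nN: "n \<le> N" using N by simp
    have IA: "\<And>j. (\<Sum>k\<le>N. A n k * Dz k j) = Dz n (2*j)" using Suc.IH nN by blast
    have IB: "\<And>j. (\<Sum>k\<le>N'. B n k * Dz (Suc k) j) = Dz n (2*j-1) + Dz n (2*j+1)" using Suc.IH N'(2) by blast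
    have IB2: "\<And>j. (\<Sum>k\<le>N. B n k * Dz (Suc k) j) = Dz n (2*j-1) + Dz n (2*j+1)" using Suc.IH nN by blast
    have "(\<Sum>k\<le>N. A (Suc n) k * Dz k j) = 2 * (\<Sum>k\<le>N. A n k * Dz k j)
        + (\<Sum>k\<le>Suc N'. (case k of 0 \<Rightarrow> 0 | Suc k' \<Rightarrow> B n k') * Dz k j)"
      unfolding N'(1) by (simp add: algebra_simps sum.distrib sum_distrib_left)
    also have "(\<Sum>k\<le>Suc N'. (case k of 0 \<Rightarrow> 0 | Suc k' \<Rightarrow> B n k') * Dz k j) = (\<Sum>k\<le>N'. B n k * Dz (Suc k) j)"
      unfolding sum.atMost_Suc_shift by simp
    finally show "(\<Sum>k\<le>N. A (Suc n) k * Dz k j) = Dz (Suc n) (2*j)"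
      unfolding IA IB D_rec[OF Suc.hyps] by simp
  next
    fix N :: nat and j :: int
    assume N: "Suc n \<le> N"
    have nN: "n \<le> N" using N by simp
    have IA: "\<And>j. (\<Sum>k\<le>N. A n k * Dz k j) = Dz n (2*j)" using Suc.IH nN by blast
    have IB2: "\<And>j. (\<Sum>k\<le>N. B n k * Dz (Suc k) j) = Dz n (2*j-1) + Dz n (2*j+1)" using Suc.IH nN by blast
    have n0: "n \<noteq> 0" using Suc.hyps by simp
    have "(\<Sum>k\<le>N. B (Suc n) k * Dz (Suc k) j) = 2 * (\<Sum>k\<le>N. B n k * Dz (Suc k) j)
        + (\<Sum>k\<le>N. A n k * Dz (Suc k) j)"
      using n0 by (simp add: algebra_simps sum.distrib sum_distrib_left)
    also have "(\<Sum>k\<le>N. A n k * Dz (Suc k) j) =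
        (\<Sum>k\<le>N. A n k * Dz k (j-1)) + 2 * (\<Sum>k\<le>N. A n k * Dz k j) + (\<Sum>k\<le>N. A n k * Dz k (j+1))"
    proof -
      have "(\<Sum>k\<le>N. A n k * Dz (Suc k) j) = (\<Sum>k\<le>N. A n k * Dz k (j-1) + 2 * (A n k * Dz k j) + A n k * Dz k (j+1))"
      proof (rule sum.cong)
        fix k assume "k \<in> {..N}"
        show "A n k * Dz (Suc k) j = A n k * Dz k (j-1) + 2 * (A n k * Dz k j) + A n k * Dz k (j+1)"
        proof (cases "k = 0")
          case True then show ?thesis by (simp add: A_0)
        next
          case False then show ?thesis using D_rec[of k j] by (simp add: algebra_simps)
        qed
      qed simp
      then show ?thesis by (simp add: sum.distrib sum_distrib_left)
    qed
    finally have "(\<Sum>k\<le>N. B (Suc n) k * Dz (Suc k) j) =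
       2 * (Dz n (2*j-1) + Dz n (2*j+1)) + Dz n (2*(j-1)) + 2 * Dz n (2*j) + Dz n (2*(j+1))"
      unfolding IA IB2 by simp
    also have "\<dots> = Dz (Suc n) (2*j-1) + Dz (Suc n) (2*j+1)"
    proof -
      have e: "2*j-1-1 = 2*(j-1)" "2*j-1+1 = 2*j" "2*j+1-1 = 2*j" "2*j+1+1 = 2*(j+1)" by simp_all
      show ?thesis unfolding D_rec[OF Suc.hyps] e by simp
    qed
    finally show "(\<Sum>k\<le>N. B (Suc n) k * Dz (Suc k) j) = Dz (Suc n) (2*j-1) + Dz (Suc n) (2*j+1)" .
  qed
qed



lemma shift_gen:
  fixes h :: "real \<Rightarrow> real"
  assumes n: "1 \<le> n" and N: "n < N" and h0: "h 0 = 0"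
  shows "(\<Sum>l\<le>N. h (real l) * Dz (Suc n) (int l)) =
     (\<Sum>l\<le>N. (h (real l + 1) + 2 * h (real l) + h (real l - 1)) * Dz n (int l))"
proof -
  obtain M where M: "N = Suc M" using N by (cases N) auto
  have "(\<Sum>l\<le>N. h (real l) * Dz (Suc n) (int l)) =
     (\<Sum>l\<le>N. h (real l) * Dz n (int l - 1)) + 2 * (\<Sum>l\<le>N. h (real l) * Dz n (int l))
     + (\<Sum>l\<le>N. h (real l) * Dz n (int l + 1))"
    unfolding D_rec[OF n] by (simp add: algebra_simps sum.distrib sum_distrib_left)
  also have "(\<Sum>l\<le>N. h (real l) * Dz n (int l - 1)) = (\<Sum>l\<le>N. h (real l + 1) * Dz n (int l))"
  proof -
    have "(\<Sum>l\<le>N. h (real l) * Dz n (int l - 1)) = (\<Sum>l\<le>M. h (real l + 1) * Dz n (int l))"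
      unfolding M sum.atMost_Suc_shift by (simp add: h0 add_ac)
    also have "\<dots> = (\<Sum>l\<le>N. h (real l + 1) * Dz n (int l))"
      unfolding M using D_van[of n "int (Suc M)"] N M by simp
    finally show ?thesis .
  qed
  also have "(\<Sum>l\<le>N. h (real l) * Dz n (int l + 1)) = (\<Sum>l\<le>N. h (real l - 1) * Dz n (int l))"
  proof -
    have "(\<Sum>l\<le>Suc N. h (real l - 1) * Dz n (int l)) = (\<Sum>l\<le>N. h (real l) * Dz n (int l + 1))"
      unfolding sum.atMost_Suc_shift by (simp add: D_0[OF n] add_ac)
    moreover have "(\<Sum>l\<le>Suc N. h (real l - 1) * Dz n (int l)) = (\<Sum>l\<le>N. h (real l - 1) * Dz n (int l))"
      using D_van[of n "int (Suc N)"] N by simp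
    ultimately show ?thesis by simp
  qed
  finally show ?thesis by (simp add: algebra_simps sum.distrib sum_distrib_left)
qed

lemma D1_nat: "Dz 1 (int l) = (if l = 1 then 1 else 0)"
  using D_1[of "int l"] by auto

lemma D1_nat': "Dz (Suc 0) (int l) = (if l = 1 then 1 else 0)"
  using D1_nat by simp

lemma Qsum: "1 \<le> n \<Longrightarrow> \<forall>N. n \<le> N \<longrightarrow> (\<Sum>l\<le>N. real l * Dz n (int l)) = 4 ^ (n - 1)"
proof (induction n rule: nat_induct_at_least)
  case base
  show ?case
  proof (intro allI impI)
    fix N :: nat assume "1 \<le> N"
    have "(\<Sum>l\<le>N. real l * Dz 1 (int l)) = (\<Sum>l\<le>N. if l = 1 then 1 else 0)"
      by (rule sum.cong) (auto simp: D1_nat')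
    then show "(\<Sum>l\<le>N. real l * Dz 1 (int l)) = 4 ^ (1 - 1)" using \<open>1 \<le> N\<close> by simp
  qed
next
  case (Suc n)
  show ?case
  proof (intro allI impI)
    fix N assume N: "Suc n \<le> N"
    have "(\<Sum>l\<le>N. real l * Dz (Suc n) (int l)) = (\<Sum>l\<le>N. (real l + 1 + 2 * real l + (real l - 1)) * Dz n (int l))"
      using shift_gen[of n N "\<lambda>x. x", OF Suc.hyps] N by simp
    also have "\<dots> = 4 * (\<Sum>l\<le>N. real l * Dz n (int l))"
      by (simp add: sum_distrib_left algebra_simps)
    also have "\<dots> = 4 ^ (Suc n - 1)" using Suc.IH N Suc.hyps
      by (simp add: power_Suc[symmetric] del: power_Suc)
    finally show "(\<Sum>l\<le>N. real l * Dz (Suc n) (int l)) = 4 ^ (Suc n - 1)" .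
  qed
qed

definition gg :: "real \<Rightarrow> real" where "gg x = (2 * x ^ 3 + x) / 3"

lemma gg_comb: "gg (x + 1) + 2 * gg x + gg (x - 1) = 4 * gg x + 4 * x"
  by (simp add: gg_def power3_eq_cube algebra_simps divide_simps)

lemma Psum: "1 \<le> n \<Longrightarrow> \<forall>N. n \<le> N \<longrightarrow> (\<Sum>l\<le>N. gg (real l) * Dz n (int l)) = real n * 4 ^ (n - 1)"
proof (induction n rule: nat_induct_at_least)
  case base
  show ?case
  proof (intro allI impI)
    fix N :: nat assume "1 \<le> N"
    have "(\<Sum>l\<le>N. gg (real l) * Dz 1 (int l)) = (\<Sum>l\<le>N. if l = 1 then 1 else 0)"
      by (rule sum.cong) (auto simp: D1_nat' gg_def)
    then show "(\<Sum>l\<le>N. gg (real l) * Dz 1 (int l)) = real 1 * 4 ^ (1 - 1)" using \<open>1 \<le> N\<close> by simp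
  qed
next
  case (Suc n)
  show ?case
  proof (intro allI impI)
    fix N assume N: "Suc n \<le> N"
    have "(\<Sum>l\<le>N. gg (real l) * Dz (Suc n) (int l)) = (\<Sum>l\<le>N. (4 * gg (real l) + 4 * real l) * Dz n (int l))"
      using shift_gen[of n N gg, OF Suc.hyps] N gg_comb by (simp add: gg_def[of 0])
    also have "\<dots> = 4 * (\<Sum>l\<le>N. gg (real l) * Dz n (int l)) + 4 * (\<Sum>l\<le>N. real l * Dz n (int l))"
      by (simp add: sum_distrib_left algebra_simps sum.distrib)
    also have "\<dots> = 4 * (real n * 4 ^ (n - 1)) + 4 * 4 ^ (n - 1)" using Suc.IH Qsum[OF Suc.hyps] N by simp
    also have "\<dots> = real (Suc n) * 4 ^ (Suc n - 1)"
      using Suc.hyps by (cases n) (simp_all add: algebra_simps)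
    finally show "(\<Sum>l\<le>N. gg (real l) * Dz (Suc n) (int l)) = real (Suc n) * 4 ^ (Suc n - 1)" .
  qed
qed



definition T :: "nat \<Rightarrow> nat \<Rightarrow> real" where
  "T r n = 4 ^ (r + 1) * (\<Sum>l\<le>n. gg (real l) * Dz n (2 ^ r * int l))"

lemma big: "int l \<le> 2 ^ r * int l"
proof -
  have "(1::int) \<le> 2 ^ r" by simp
  then show ?thesis by (simp add: mult_le_cancel_right1)
qed

lemma ext_sum: "k \<le> n \<Longrightarrow> (\<Sum>l\<le>k. f l * Dz k (2 ^ r * int l)) = (\<Sum>l\<le>n. f l * Dz k (2 ^ r * int l))"
proof (rule sum.mono_neutral_left)
  show "\<forall>i\<in>{..n} - {..k}. f i * Dz k (2 ^ r * int i) = 0"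
  proof
    fix i assume "i \<in> {..n} - {..k}"
    then have "int k < int i" by simp
    then have "int k < 2 ^ r * int i" using big[of i r] by linarith
    then show "f i * Dz k (2 ^ r * int i) = 0" by (simp add: D_van)
  qed
qed auto

lemma main: "\<forall>n. 1 \<le> n \<longrightarrow> S r n = T r n"
proof (induction r)
  case 0
  show ?case
  proof (intro allI impI)
    fix n :: nat assume n: "1 \<le> n"
    have "S 0 n = real n * 4 ^ n" by (rule S_0)
    also have "\<dots> = 4 * (real n * 4 ^ (n - 1))" using n by (cases n) auto
    also have "\<dots> = T 0 n" unfolding T_def using Psum[OF n] by simp
    finally show "S 0 n = T 0 n" .
  qed
next
  case (Suc r)
  show ?case
  proof (intro allI impI)
    fix n :: nat assume n: "1 \<le> n"
    show "S (Suc r) n = T (Suc r) n"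
    proof (cases "n = 1")
      case True
      have "T (Suc r) 1 = 0" unfolding T_def
      proof -
        have "\<And>l. Dz 1 (2 ^ Suc r * int l) = 0"
          using D_1_even by (simp add: mult.assoc)
        then show "4 ^ (Suc r + 1) * (\<Sum>l\<le>1. gg (real l) * Dz 1 (2 ^ Suc r * int l)) = 0" by simp
      qed
      then show ?thesis using True S_Suc1 by simp
    next
      case False
      then have n2: "2 \<le> n" using n by simp
      have "S (Suc r) n = 4 * (\<Sum>k\<le>n. A n k * S r k)" by (rule S_Suc2[OF n2])
      also have "\<dots> = 4 * (\<Sum>k\<le>n. A n k * T r k)"
      proof -
        have "\<And>k. k \<in> {..n} \<Longrightarrow> A n k * S r k = A n k * T r k"
        proof -
          fix k assume "k \<in> {..n}"
          show "A n k * S r k = A n k * T r k"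
          proof (cases "k = 0")
            case True then show ?thesis by (simp add: A_0)
          next
            case False then show ?thesis using Suc.IH by simp
          qed
        qed
        then have "(\<Sum>k\<le>n. A n k * S r k) = (\<Sum>k\<le>n. A n k * T r k)" by (rule sum.cong[OF refl])
        then show ?thesis by simp
      qed
      also have "\<dots> = 4 * 4 ^ (r + 1) * (\<Sum>k\<le>n. \<Sum>l\<le>n. gg (real l) * (A n k * Dz k (2 ^ r * int l)))"
      proof -
        have "\<And>k. k \<in> {..n} \<Longrightarrow> A n k * T r k = 4 ^ (r + 1) * (\<Sum>l\<le>n. gg (real l) * (A n k * Dz k (2 ^ r * int l)))"
        proof -
          fix k assume "k \<in> {..n}"
          then have "k \<le> n" by simp
          show "A n k * T r k = 4 ^ (r + 1) * (\<Sum>l\<le>n. gg (real l) * (A n k * Dz k (2 ^ r * int l)))"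
            unfolding T_def ext_sum[OF \<open>k \<le> n\<close>] by (simp add: sum_distrib_left algebra_simps)
        qed
        then have "(\<Sum>k\<le>n. A n k * T r k) = (\<Sum>k\<le>n. 4 ^ (r + 1) * (\<Sum>l\<le>n. gg (real l) * (A n k * Dz k (2 ^ r * int l))))"
          by (rule sum.cong[OF refl])
        also have "\<dots> = 4 ^ (r + 1) * (\<Sum>k\<le>n. \<Sum>l\<le>n. gg (real l) * (A n k * Dz k (2 ^ r * int l)))"
          by (rule sum_distrib_left[symmetric])
        finally show ?thesis by simp
      qed
      also have "\<dots> = 4 * 4 ^ (r + 1) * (\<Sum>l\<le>n. gg (real l) * (\<Sum>k\<le>n. A n k * Dz k (2 ^ r * int l)))"
      proof -
        have "(\<Sum>k\<le>n. \<Sum>l\<le>n. gg (real l) * (A n k * Dz k (2 ^ r * int l)))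
           = (\<Sum>l\<le>n. \<Sum>k\<le>n. gg (real l) * (A n k * Dz k (2 ^ r * int l)))"
          by (rule sum.swap)
        also have "\<dots> = (\<Sum>l\<le>n. gg (real l) * (\<Sum>k\<le>n. A n k * Dz k (2 ^ r * int l)))"
          by (simp only: sum_distrib_left)
        finally show ?thesis by simp
      qed
      also have "\<dots> = 4 * 4 ^ (r + 1) * (\<Sum>l\<le>n. gg (real l) * Dz n (2 * (2 ^ r * int l)))"
        using key[OF n] by simp
      also have "\<dots> = T (Suc r) n" unfolding T_def by (simp add: mult.assoc)
      finally show ?thesis .
    qed
  qed
qed

theorem proposition6:
  fixes n r :: nat
  assumes "n \<ge> 1"
  shows "expected_fringe n r =
    (4::real) powi (int r + 1 - int n) *
      (\<Sum>k. (2 * real (Suc k) ^ 3 + real (Suc k)) / 3 *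
         (real (binomZ (2 * n - 1) (int n - 2 ^ r * int (Suc k)))
          - real (binomZ (2 * n - 1) (int n - 2 ^ r * int (Suc k) - 1))))"
proof -
  define f where "f k = (2 * real (Suc k) ^ 3 + real (Suc k)) / 3 *
         (real (binomZ (2 * n - 1) (int n - 2 ^ r * int (Suc k)))
          - real (binomZ (2 * n - 1) (int n - 2 ^ r * int (Suc k) - 1)))" for k
  have fD: "f k = gg (real (Suc k)) * Dz n (2 ^ r * int (Suc k))" for k
    unfolding f_def gg_def Dz_def by (simp add: algebra_simps)
  obtain n' where n': "n = Suc n'" using assms by (cases n) auto
  have "(\<Sum>k. f k) = (\<Sum>k\<in>{..<n}. f k)"
  proof (rule suminf_finite)
    fix k assume "k \<notin> {..<n}"
    then have "int n < int (Suc k)" by simp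
    then have "int n < 2 ^ r * int (Suc k)" using big[of "Suc k" r] by linarith
    then show "f k = 0" unfolding fD by (simp add: D_van)
  qed simp
  also have "\<dots> = (\<Sum>l\<le>n. gg (real l) * Dz n (2 ^ r * int l))"
    unfolding n' sum.atMost_Suc_shift lessThan_Suc_atMost fD by (simp add: gg_def)
  finally have sf: "(\<Sum>k. f k) = (\<Sum>l\<le>n. gg (real l) * Dz n (2 ^ r * int l))" .
  have pw: "(4::real) powi (int r + 1 - int n) = 4 ^ (r + 1) / 4 ^ n"
  proof -
    have e: "int r + 1 - int n = int (r + 1) - int n" by simp
    have "(4::real) powi (int (r+1) - int n) = 4 powi int (r+1) / 4 powi int n" by (rule power_int_diff) simp
    also have "\<dots> = 4^(r+1) / 4^n" by (simp only: power_int_of_nat)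
    finally show ?thesis unfolding e .
  qed
  have "expected_fringe n r = S r n / 4 ^ n"
    unfolding expected_fringe_def S_def W_def ..
  also have "\<dots> = T r n / 4 ^ n" using main assms by simp
  also have "\<dots> = (4::real) powi (int r + 1 - int n) * (\<Sum>k. f k)"
    unfolding pw sf T_def by simp
  finally show ?thesis unfolding f_def .
qed

end
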